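(* Let $a<b$, $\lambda>0$, let $H(y):=\tfrac12\left(\tfrac12 y^2-\lambda\right)^2$ for $y\in\mathbb{R}$, let $\theta\in C[a,b]$ with $\min_{[a,b]}\theta>0$, and let $F\in C^1[a,b]$ with $F(a)=F(b)=0$, $F(x)\neq0$ for $x\in(a,b)$ and $\|F\|_\infty<(2\lambda/3)^{3/2}$. Let $X:=C_0[a,b]:=\{v\in C[a,b]\mid v(a)=v(b)=0\}$ and $K:X\to\mathbb{R}$, $K(v):=\int_a^b\theta\cdot(H\circ v-Fv)$. For $A\in\left(-(2\lambda/3)^{3/2},(2\lambda/3)^{3/2}\right)$ let $z_2(A)$ denote the unique solution in $\left(-\sqrt{2\lambda/3},\sqrt{2\lambda/3}\right)$ of $z\left(\tfrac12z^2-\lambda\right)=A$, and let $\overline v:=z_2\circ F$ (the unique stationary point of $K$). Then $\overline v$ is a local maximizer of $K$ with respect to the norm $\|\cdot\|_\infty$ on $X$, and $\overline v$ is not a local extremum point (neither local minimizer nor local maximizer) of $K$ with respect to the norm $\|\cdot\|_p$ on $X$ for any $p\in[1,4)$.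
   Context: $\|\cdot\|_p$ denotes the $L^p(a,b)$-norm restricted to $X$; $\|\cdot\|_\infty$ is the supremum norm. A stationary point of $K$ is a $v\in X$ with $\int_a^b\theta\left[v\left(\tfrac12v^2-\lambda\right)-F\right]h=0$ for all $h\in X$. *)

theory Defs
  imports "HOL-Analysis.Analysis"
begin

definition H :: "real \<Rightarrow> real \<Rightarrow> real" where
  "H lam y = (1/2) * ((1/2) * y^2 - lam)^2"

text \<open>The space X = C_0[a,b] (functions are real => real; only values on [a,b] matter).\<close>
definition C0 :: "real \<Rightarrow> real \<Rightarrow> (real \<Rightarrow> real) set" where
  "C0 a b = {v. continuous_on {a..b} v \<and> v a = 0 \<and> v b = 0}"

definition supnorm :: "real \<Rightarrow> real \<Rightarrow> (real \<Rightarrow> real) \<Rightarrow> real" where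
  "supnorm a b f = (SUP x\<in>{a..b}. \<bar>f x\<bar>)"

definition lpnorm :: "real \<Rightarrow> real \<Rightarrow> real \<Rightarrow> (real \<Rightarrow> real) \<Rightarrow> real" where
  "lpnorm a b p f = (integral {a..b} (\<lambda>x. \<bar>f x\<bar> powr p)) powr (1/p)"

definition Kfun :: "real \<Rightarrow> real \<Rightarrow> real \<Rightarrow> (real \<Rightarrow> real) \<Rightarrow> (real \<Rightarrow> real) \<Rightarrow> (real \<Rightarrow> real) \<Rightarrow> real" where
  "Kfun a b lam \<theta> F v = integral {a..b} (\<lambda>x. \<theta> x * (H lam (v x) - F x * v x))"

definition z2 :: "real \<Rightarrow> real \<Rightarrow> real" where
  "z2 lam A = (THE z. z \<in> {- sqrt (2*lam/3) <..< sqrt (2*lam/3)} \<and> z * ((1/2) * z^2 - lam) = A)"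

definition local_max_wrt :: "('a \<Rightarrow> real) set \<Rightarrow> (('a \<Rightarrow> real) \<Rightarrow> real) \<Rightarrow> (('a \<Rightarrow> real) \<Rightarrow> real) \<Rightarrow> ('a \<Rightarrow> real) \<Rightarrow> bool" where
  "local_max_wrt S N J u \<longleftrightarrow> u \<in> S \<and> (\<exists>\<epsilon>>0. \<forall>v\<in>S. N (\<lambda>x. v x - u x) < \<epsilon> \<longrightarrow> J v \<le> J u)"

definition local_min_wrt :: "('a \<Rightarrow> real) set \<Rightarrow> (('a \<Rightarrow> real) \<Rightarrow> real) \<Rightarrow> (('a \<Rightarrow> real) \<Rightarrow> real) \<Rightarrow> ('a \<Rightarrow> real) \<Rightarrow> bool" where
  "local_min_wrt S N J u \<longleftrightarrow> u \<in> S \<and> (\<exists>\<epsilon>>0. \<forall>v\<in>S. N (\<lambda>x. v x - u x) < \<epsilon> \<longrightarrow> J u \<le> J v)"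

end

theory Submission
  imports Defs "HOL-Analysis.Analysis"
begin


definition gg :: "real \<Rightarrow> real \<Rightarrow> real" where "gg lam z = z * ((1/2) * z^2 - lam)"

lemma key_identity:
  "(H lam y - gg lam z * y) - (H lam z - gg lam z * z)
     = (y - z)^2 * ((y + z)^2/8 + z^2/4 - lam/2)"
  unfolding H_def gg_def by (simp add: field_simps power2_eq_square)

lemma M_eq: assumes "lam > 0" shows "(2*lam/3) powr (3/2) = sqrt (2*lam/3) ^ 3"
proof -
  have "(2*lam/3) powr (3/2) = (2*lam/3) powr (1 + 1/2)" by simp
  also have "\<dots> = (2*lam/3) powr 1 * (2*lam/3) powr (1/2)"
    by (rule powr_add)
  also have "\<dots> = (2*lam/3) * (2*lam/3) powr (1/2)" using assms by simp
  also have "\<dots> = sqrt (2*lam/3)^2 * sqrt (2*lam/3)" using assms by (simp add: powr_half_sqrt)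
  finally show ?thesis by (simp add: power3_eq_cube power2_eq_square)
qed

lemma s_sq: assumes "lam > 0" shows "sqrt (2*lam/3)^2 = 2*lam/3"
  using assms by simp

lemma gg_s: assumes "lam > 0"
  shows "gg lam (sqrt (2*lam/3)) = - (sqrt (2*lam/3) ^ 3)"
        "gg lam (- sqrt (2*lam/3)) = sqrt (2*lam/3) ^ 3"
proof -
  let ?s = "sqrt (2*lam/3)"
  have "?s^2 = 2*lam/3" using assms by simp
  then have l: "lam = 3/2 * ?s^2" by simp
  show "gg lam ?s = - (?s ^ 3)" unfolding gg_def by (subst l) (simp add: algebra_simps power2_eq_square power3_eq_cube)
  show "gg lam (-?s) = ?s ^ 3" unfolding gg_def by (subst l) (simp add: algebra_simps power2_eq_square power3_eq_cube)
qed

lemma gg_strict: assumes "lam > 0" "- sqrt (2*lam/3) \<le> y" "y < z" "z \<le> sqrt (2*lam/3)"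
  shows "gg lam z < gg lam y"
proof -
  let ?s = "sqrt (2*lam/3)"
  have l: "lam = 3/2 * ?s^2" using assms by simp
  have d: "gg lam z - gg lam y = (z - y) * ((y^2 + y*z + z^2)/2 - lam)"
    unfolding gg_def by (simp add: field_simps power2_eq_square)
  have yb: "\<bar>y\<bar> \<le> ?s" and zb: "\<bar>z\<bar> \<le> ?s" using assms by auto
  have "\<bar>y\<bar>^2 \<le> ?s^2" "\<bar>z\<bar>^2 \<le> ?s^2"
    by (rule power_mono[OF yb abs_ge_zero], rule power_mono[OF zb abs_ge_zero])
  then have "y^2 \<le> 2*lam/3" "z^2 \<le> 2*lam/3" using assms(1) by simp_all
  moreover have "y*z < (y^2+z^2)/2"
  proof -
    have "0 < (y-z)^2" using assms(3) by simp
    then show ?thesis unfolding power2_diff by (simp add: field_simps)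
  qed
  ultimately have "(y^2 + y*z + z^2)/2 - lam < 0" by (simp add: field_simps)
  moreover have "z - y > 0" using assms by simp
  ultimately have "gg lam z - gg lam y < 0" unfolding d by (simp add: mult_pos_neg)
  then show ?thesis by simp
qed


lemma gg_inj: assumes "lam > 0" "\<bar>y\<bar> \<le> sqrt (2*lam/3)" "\<bar>z\<bar> \<le> sqrt (2*lam/3)" "gg lam y = gg lam z"
  shows "y = z"
proof (rule ccontr)
  assume "y \<noteq> z"
  then consider "y < z" | "z < y" by linarith
  then show False
    using gg_strict[of lam y z] gg_strict[of lam z y] assms by (cases; auto simp: abs_le_iff)
qed

lemma gg_cont: "continuous_on S (gg lam)"
  unfolding gg_def by (intro continuous_intros)

lemma z2_prop: assumes lam: "lam > 0" and c: "\<bar>c\<bar> < sqrt (2*lam/3) ^ 3"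
  shows "\<bar>z2 lam c\<bar> < sqrt (2*lam/3)" "gg lam (z2 lam c) = c"
proof -
  let ?s = "sqrt (2*lam/3)"
  have sp: "?s > 0" using lam by simp
  have ic: "\<forall>x. -?s \<le> x \<and> x \<le> ?s \<longrightarrow> isCont (gg lam) x"
    unfolding gg_def by (auto intro!: continuous_intros)
  have c1: "gg lam ?s \<le> c" "c \<le> gg lam (-?s)" using gg_s[OF lam] c by (auto simp: abs_less_iff)
  obtain z where z: "-?s \<le> z" "z \<le> ?s" "gg lam z = c"
    using IVT2[of "gg lam" ?s c "-?s", OF c1 _ ic] sp by auto
  have "z \<noteq> ?s" "z \<noteq> -?s" using z gg_s[OF lam] c by auto
  then have zi: "\<bar>z\<bar> < ?s" using z by auto
  have ex: "\<exists>!z. z \<in> {- ?s <..< ?s} \<and> gg lam z = c"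
  proof (rule ex1I[of _ z])
    show "z \<in> {- ?s <..< ?s} \<and> gg lam z = c" using zi z(3) by (simp add: abs_less_iff)
    fix y assume y: "y \<in> {- ?s <..< ?s} \<and> gg lam y = c"
    then have "\<bar>y\<bar> \<le> ?s" by (simp add: abs_le_iff)
    then show "y = z" using gg_inj[OF lam, of y z] zi z(3) y by simp
  qed
  have "z2 lam c \<in> {- ?s <..< ?s} \<and> gg lam (z2 lam c) = c"
    unfolding z2_def gg_def[symmetric] using theI'[OF ex] .
  then show "\<bar>z2 lam c\<bar> < ?s" "gg lam (z2 lam c) = c" by (simp_all add: abs_less_iff)
qed

lemma z2_eq: assumes lam: "lam > 0" and "\<bar>z\<bar> < sqrt (2*lam/3)"
  shows "z2 lam (gg lam z) = z"
proof -
  let ?s = "sqrt (2*lam/3)"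
  have "\<bar>gg lam z\<bar> < ?s ^ 3"
  proof -
    have "gg lam ?s < gg lam z" "gg lam z < gg lam (-?s)"
      using gg_strict[OF lam, of z ?s] gg_strict[OF lam, of "-?s" z] assms by auto
    then show ?thesis using gg_s[OF lam] by auto
  qed
  from z2_prop[OF lam this] show ?thesis using gg_inj[OF lam, of "z2 lam (gg lam z)" z] assms by auto
qed


lemma gg_odd: "gg lam (-x) = - gg lam x" unfolding gg_def by simp

lemma z2_bound_cont:
  assumes lam: "lam > 0" and S0: "0 \<le> S0" "S0 < sqrt (2*lam/3) ^ 3"
  obtains r where "0 \<le> r" "r < sqrt (2*lam/3)"
    "\<And>c. \<bar>c\<bar> \<le> S0 \<Longrightarrow> \<bar>z2 lam c\<bar> \<le> r \<and> gg lam (z2 lam c) = c"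
    "continuous_on {-S0..S0} (z2 lam)"
proof -
  let ?s = "sqrt (2*lam/3)"
  define r where "r = z2 lam (-S0)"
  have rs: "\<bar>r\<bar> < ?s" "gg lam r = -S0" using z2_prop[OF lam, of "-S0"] S0 unfolding r_def by auto
  have g0: "gg lam 0 = 0" unfolding gg_def by simp
  have r0: "0 \<le> r"
  proof (rule ccontr)
    assume "\<not> 0 \<le> r"
    then have "gg lam 0 < gg lam r" using gg_strict[OF lam, of r 0] rs lam by auto
    then show False using g0 rs S0 by simp
  qed
  have bnd: "\<bar>z2 lam c\<bar> \<le> r \<and> gg lam (z2 lam c) = c" if c: "\<bar>c\<bar> \<le> S0" for c
  proof -
    let ?z = "z2 lam c"
    have z: "\<bar>?z\<bar> < ?s" "gg lam ?z = c" using z2_prop[OF lam, of c] c S0 by auto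
    have "\<not> ?z > r"
    proof
      assume "?z > r"
      then have "gg lam ?z < gg lam r" using gg_strict[OF lam, of r ?z] rs z by auto
      then show False using rs z c by auto
    qed
    moreover have "\<not> ?z < -r"
    proof
      assume "?z < -r"
      then have "gg lam (-r) < gg lam ?z" using gg_strict[OF lam, of ?z "-r"] rs z by auto
      then show False using rs z c gg_odd[of lam r] by auto
    qed
    ultimately show ?thesis using z by auto
  qed
  have "continuous_on (gg lam ` {-r..r}) (z2 lam)"
  proof (rule continuous_on_inv)
    show "continuous_on {-r..r} (gg lam)" by (rule gg_cont)
    show "compact {-r..r}" by simp
    show "\<forall>x\<in>{-r..r}. z2 lam (gg lam x) = x" using z2_eq[OF lam] rs by auto
  qed
  moreover have "{-S0..S0} \<subseteq> gg lam ` {-r..r}"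
  proof
    fix c assume "c \<in> {-S0..S0}"
    then have "\<bar>c\<bar> \<le> S0" by auto
    from bnd[OF this] show "c \<in> gg lam ` {-r..r}" by (auto intro!: image_eqI[of _ _ "z2 lam c"])
  qed
  ultimately have "continuous_on {-S0..S0} (z2 lam)" by (rule continuous_on_subset)
  then show ?thesis using that r0 rs bnd by auto
qed


lemma ind_int:
  fixes A :: real
  assumes "a \<le> c1" "c1 \<le> d1" "d1 \<le> b"
  shows "(\<lambda>x. if x \<in> {c1..d1} then A else 0) integrable_on {a..b}"
        "integral {a..b} (\<lambda>x. if x \<in> {c1..d1} then A else 0) = A * (d1 - c1)"
proof -
  have e: "{c1..d1} \<inter> {a..b} = {c1..d1}" using assms by auto
  show "(\<lambda>x. if x \<in> {c1..d1} then A else 0) integrable_on {a..b}"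
    unfolding integrable_restrict_Int e by (rule integrable_const_ivl)
  show "integral {a..b} (\<lambda>x. if x \<in> {c1..d1} then A else 0) = A * (d1 - c1)"
    unfolding integral_restrict_Int e using assms by simp
qed

lemma cont_abs_powr: fixes f :: "'a::topological_space \<Rightarrow> real"
  assumes "continuous_on S f" "p > 0"
  shows "continuous_on S (\<lambda>x. \<bar>f x\<bar> powr p)"
  by (rule continuous_on_powr'[of S "\<lambda>x. \<bar>f x\<bar>" "\<lambda>x. p", simplified])
     (use assms in \<open>auto intro!: continuous_intros\<close>)

lemma lp_bound:
  assumes p: "p > 0" and h: "h \<ge> 0" and f: "continuous_on {a..b} f"
    and cd: "a \<le> c1" "c1 \<le> d1" "d1 \<le> b"
    and fb: "\<forall>x\<in>{a..b}. \<bar>f x\<bar> \<le> h"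
    and f0: "\<forall>x\<in>{a..b}. x \<notin> {c1..d1} \<longrightarrow> f x = 0"
  shows "lpnorm a b p f \<le> h * (d1 - c1) powr (1/p)"
proof -
  let ?I = "integral {a..b} (\<lambda>x. \<bar>f x\<bar> powr p)"
  have int1: "(\<lambda>x. \<bar>f x\<bar> powr p) integrable_on {a..b}"
    by (rule integrable_continuous_interval, rule cont_abs_powr[OF f p])
  have "?I \<le> integral {a..b} (\<lambda>x. if x \<in> {c1..d1} then h powr p else 0)"
  proof (rule integral_le[OF int1 ind_int(1)[OF cd]])
    fix x assume x: "x \<in> {a..b}"
    show "\<bar>f x\<bar> powr p \<le> (if x \<in> {c1..d1} then h powr p else 0)"
    proof (cases "x \<in> {c1..d1}")
      case True then show ?thesis using fb x p by (simp add: powr_mono2)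
    next
      case False then show ?thesis using f0 x by simp
    qed
  qed
  also have "\<dots> = h powr p * (d1 - c1)" by (rule ind_int(2)[OF cd])
  finally have I1: "?I \<le> h powr p * (d1 - c1)" .
  have I0: "0 \<le> ?I" by (rule integral_nonneg[OF int1]) simp
  have "lpnorm a b p f = ?I powr (1/p)" unfolding lpnorm_def ..
  also have "\<dots> \<le> (h powr p * (d1 - c1)) powr (1/p)"
    using I0 I1 p by (intro powr_mono2) auto
  also have "\<dots> = (h powr p) powr (1/p) * (d1 - c1) powr (1/p)"
    using cd h by (simp add: powr_mult)
  also have "(h powr p) powr (1/p) = h" using p h by (simp add: powr_powr)
  finally show ?thesis .
qed

lemma le_supnorm: assumes "continuous_on {a..b} f" "x \<in> {a..b}"
  shows "\<bar>f x\<bar> \<le> supnorm a b f"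
proof -
  have "compact ((\<lambda>x. \<bar>f x\<bar>) ` {a..b})"
    by (intro compact_continuous_image continuous_intros assms(1)) simp
  then have "bdd_above ((\<lambda>x. \<bar>f x\<bar>) ` {a..b})"
    by (intro bounded_imp_bdd_above compact_imp_bounded)
  then show ?thesis unfolding supnorm_def using assms(2) by (rule cSUP_upper2) simp
qed

lemma K_diff:
  assumes "continuous_on {a..b} \<theta>" "continuous_on {a..b} F"
    "continuous_on {a..b} v" "continuous_on {a..b} u"
  shows "Kfun a b lam \<theta> F v - Kfun a b lam \<theta> F u =
    integral {a..b} (\<lambda>x. \<theta> x * ((H lam (v x) - F x * v x) - (H lam (u x) - F x * u x)))"
proof -
  have i1: "(\<lambda>x. \<theta> x * (H lam (v x) - F x * v x)) integrable_on {a..b}"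
    using assms unfolding H_def by (intro integrable_continuous_interval continuous_intros)
  have i2: "(\<lambda>x. \<theta> x * (H lam (u x) - F x * u x)) integrable_on {a..b}"
    using assms unfolding H_def by (intro integrable_continuous_interval continuous_intros)
  show ?thesis unfolding Kfun_def integral_diff[OF i1 i2, symmetric]
    by (simp add: algebra_simps)
qed


lemma sq_le_of_abs: fixes x y :: real assumes "\<bar>x\<bar> \<le> y" shows "x^2 \<le> y^2"
proof -
  have "\<bar>x\<bar>^2 \<le> y^2" by (rule power_mono[OF assms abs_ge_zero])
  then show ?thesis by simp
qed

lemma Q_nonpos: assumes lam: "lam > 0" and "\<bar>z\<bar> \<le> sqrt (2*lam/3)" "\<bar>y+z\<bar> \<le> 2* sqrt (2*lam/3)"
  shows "(y+z)^2/8 + z^2/4 - lam/2 \<le> (0::real)"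
proof -
  let ?s = "sqrt (2*lam/3)"
  have "(y+z)^2 \<le> (2*?s)^2" "z^2 \<le> ?s^2" using sq_le_of_abs assms(2,3) by blast+
  moreover have "?s^2 = 2*lam/3" using lam by simp
  moreover have "(2*?s)^2 = 4 * ?s^2" by (simp add: power_mult_distrib)
  ultimately show ?thesis by linarith
qed

lemma c0_pos: assumes lam: "lam > 0" and r: "0 \<le> r" "r < sqrt (2*lam/3)"
  shows "lam/2 - (r + sqrt (2*lam/3))^2/8 - r^2/4 > 0"
proof -
  let ?s = "sqrt (2*lam/3)"
  have "(r + ?s)^2 < (2*?s)^2" using r by (intro power_strict_mono) auto
  moreover have "r^2 \<le> ?s^2" using r by (intro power_mono) auto
  moreover have "?s^2 = 2*lam/3" using lam by simp
  ultimately show ?thesis by (simp add: power_mult_distrib)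
qed

lemma Q_neg: assumes lam: "lam > 0" and "\<bar>z\<bar> \<le> r" "\<bar>y+z\<bar> \<le> r + sqrt (2*lam/3)" "0 \<le> r"
  shows "(y+z)^2/8 + z^2/4 - lam/2 \<le> - (lam/2 - (r + sqrt (2*lam/3))^2/8 - r^2/4)"
proof -
  have "(y+z)^2 \<le> (r + sqrt (2*lam/3))^2" "z^2 \<le> r^2" using assms by (auto intro: sq_le_of_abs)
  then show ?thesis by simp
qed

lemma Q_big: fixes s :: real assumes "\<bar>z\<bar> \<le> s" "2* s \<le> h" "y = z + h"
  shows "(h - 2* s)^2/8 - lam/2 \<le> (y+z)^2/8 + z^2/4 - lam/2"
proof -
  have "0 \<le> h - 2* s" "h - 2* s \<le> y + z" using assms by auto
  then have "(h-2* s)^2 \<le> (y+z)^2" by (intro power_mono)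
  moreover have "0 \<le> z^2" by simp
  ultimately show ?thesis by linarith
qed

definition trap :: "real \<Rightarrow> real \<Rightarrow> real \<Rightarrow> real" where
  "trap c d x = min 1 (max 0 (2 - \<bar>x - c\<bar> / d))"

lemma trap_props: assumes "d > 0"
  shows "0 \<le> trap c d x" "trap c d x \<le> 1"
    "\<bar>x - c\<bar> \<ge> 2*d \<Longrightarrow> trap c d x = 0"
    "\<bar>x - c\<bar> \<le> d \<Longrightarrow> trap c d x = 1"
    "continuous_on S (trap c d)"
proof -
  show "0 \<le> trap c d x" "trap c d x \<le> 1" unfolding trap_def by auto
  show "\<bar>x - c\<bar> \<ge> 2*d \<Longrightarrow> trap c d x = 0"
  proof -
    assume "\<bar>x - c\<bar> \<ge> 2*d"
    then have "\<bar>x - c\<bar>/d \<ge> 2" using assms by (simp add: field_simps)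
    then show ?thesis unfolding trap_def by auto
  qed
  show "\<bar>x - c\<bar> \<le> d \<Longrightarrow> trap c d x = 1"
  proof -
    assume "\<bar>x - c\<bar> \<le> d"
    then have "\<bar>x - c\<bar>/d \<le> 1" using assms by (simp add: field_simps)
    then show ?thesis unfolding trap_def by auto
  qed
  show "continuous_on S (trap c d)" unfolding trap_def using assms by (intro continuous_intros) auto
qed


lemma pert:
  assumes ab: "a < b" and d: "0 < d" "d \<le> (b-a)/8" and t: "0 \<le> t" and p: "0 < p"
    and vb: "vb \<in> C0 a b"
  shows "(\<lambda>x. vb x + t * trap ((a+b)/2) d x) \<in> C0 a b"
        "lpnorm a b p (\<lambda>x. (vb x + t * trap ((a+b)/2) d x) - vb x) \<le> t * (4*d) powr (1/p)"
proof -
  let ?c = "(a+b)/2"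
  have ta: "trap ?c d a = 0" "trap ?c d b = 0"
    using d by (auto intro!: trap_props(3) simp: abs_if field_simps)
  have tc: "continuous_on {a..b} (trap ?c d)" using trap_props(5)[OF d(1)] .
  show "(\<lambda>x. vb x + t * trap ?c d x) \<in> C0 a b"
    using vb ta tc unfolding C0_def by (auto intro!: continuous_intros)
  have "lpnorm a b p (\<lambda>x. t * trap ?c d x) \<le> t * ((?c + 2*d) - (?c - 2*d)) powr (1/p)"
  proof (rule lp_bound[OF p t])
    show "continuous_on {a..b} (\<lambda>x. t * trap ?c d x)" using tc by (intro continuous_intros)
    show "a \<le> ?c - 2*d" "?c - 2*d \<le> ?c + 2*d" "?c + 2*d \<le> b" using d by (auto simp: field_simps)
    show "\<forall>x\<in>{a..b}. \<bar>t * trap ?c d x\<bar> \<le> t"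
      using t trap_props(1,2)[OF d(1)] by (auto simp: abs_mult mult_left_le)
    show "\<forall>x\<in>{a..b}. x \<notin> {?c - 2*d..?c + 2*d} \<longrightarrow> t * trap ?c d x = 0"
    proof (intro ballI impI)
      fix x assume "x \<notin> {?c - 2*d..?c + 2*d}"
      then have "\<bar>x - ?c\<bar> \<ge> 2*d" by auto
      then show "t * trap ?c d x = 0" using trap_props(3)[OF d(1)] by simp
    qed
  qed
  then show "lpnorm a b p (\<lambda>x. (vb x + t * trap ?c d x) - vb x) \<le> t * (4*d) powr (1/p)"
    by simp
qed


theorem proposition3:
  fixes a b lam :: real and \<theta> F :: "real \<Rightarrow> real"
  assumes ab: "a < b" and lam: "lam > 0"
    and \<theta>_cont: "continuous_on {a..b} \<theta>"
    and \<theta>_pos: "\<forall>x\<in>{a..b}. \<theta> x > 0"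
    and F_C1: "\<exists>F'. continuous_on {a..b} F' \<and>
                 (\<forall>x\<in>{a..b}. (F has_real_derivative F' x) (at x within {a..b}))"
    and Fa: "F a = 0" and Fb: "F b = 0"
    and F_nz: "\<forall>x\<in>{a<..<b}. F x \<noteq> 0"
    and F_small: "supnorm a b F < (2*lam/3) powr (3/2)"
  shows "local_max_wrt (C0 a b) (supnorm a b) (Kfun a b lam \<theta> F) (\<lambda>x. z2 lam (F x))
       \<and> (\<forall>p. 1 \<le> p \<and> p < 4 \<longrightarrow>
            \<not> local_min_wrt (C0 a b) (lpnorm a b p) (Kfun a b lam \<theta> F) (\<lambda>x. z2 lam (F x)) \<and>
            \<not> local_max_wrt (C0 a b) (lpnorm a b p) (Kfun a b lam \<theta> F) (\<lambda>x. z2 lam (F x)))"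
proof -
  obtain F' where F': "\<forall>x\<in>{a..b}. (F has_real_derivative F' x) (at x within {a..b})"
    using F_C1 by blast
  have Fc: "continuous_on {a..b} F"
    unfolding continuous_on_eq_continuous_within using F' DERIV_continuous by blast
  define s where "s = sqrt (2*lam/3)"
  have s_pos: "s > 0" using lam s_def by simp
  define S0 where "S0 = supnorm a b F"
  have Fbd: "\<forall>x\<in>{a..b}. \<bar>F x\<bar> \<le> S0" using le_supnorm[OF Fc] S0_def by blast
  have S00: "0 \<le> S0" using Fbd ab by (meson abs_ge_zero atLeastAtMost_iff less_imp_le order_refl order_trans)
  have S0M: "S0 < sqrt (2*lam/3) ^ 3" using F_small M_eq[OF lam] S0_def by simp
  obtain r where r: "0 \<le> r" "r < s" "\<And>c. \<bar>c\<bar> \<le> S0 \<Longrightarrow> \<bar>z2 lam c\<bar> \<le> r \<and> gg lam (z2 lam c) = c"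
      "continuous_on {-S0..S0} (z2 lam)"
    using z2_bound_cont[OF lam S00 S0M] unfolding s_def by blast
  define vb where "vb = (\<lambda>x. z2 lam (F x))"
  have vbb: "\<bar>vb x\<bar> \<le> r" "gg lam (vb x) = F x" if "x \<in> {a..b}" for x
    using r(3) Fbd that unfolding vb_def by auto
  have vbc: "continuous_on {a..b} vb" unfolding vb_def
    by (rule continuous_on_compose2[OF r(4) Fc]) (use Fbd in \<open>auto simp: abs_le_iff\<close>)
  have z20: "z2 lam 0 = 0" using z2_eq[OF lam, of 0] lam by (simp add: gg_def)
  have vbC0: "vb \<in> C0 a b" unfolding C0_def using vbc Fa Fb z20 vb_def by simp
  define Q where "Q = (\<lambda>y z. (y + z)^2/8 + z^2/4 - lam/2)"
  have Kd: "Kfun a b lam \<theta> F v - Kfun a b lam \<theta> F vb =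
      integral {a..b} (\<lambda>x. \<theta> x * ((v x - vb x)^2 * Q (v x) (vb x)))"
    if vc: "continuous_on {a..b} v" for v
  proof -
    have "Kfun a b lam \<theta> F v - Kfun a b lam \<theta> F vb =
      integral {a..b} (\<lambda>x. \<theta> x * ((H lam (v x) - F x * v x) - (H lam (vb x) - F x * vb x)))"
      by (rule K_diff[OF \<theta>_cont Fc vc vbc])
    also have "\<dots> = integral {a..b} (\<lambda>x. \<theta> x * ((v x - vb x)^2 * Q (v x) (vb x)))"
    proof (rule integral_cong)
      fix x assume "x \<in> {a..b}"
      then show "\<theta> x * ((H lam (v x) - F x * v x) - (H lam (vb x) - F x * vb x)) =
          \<theta> x * ((v x - vb x)^2 * Q (v x) (vb x))"
        using key_identity[of lam "v x" "vb x"] vbb(2)[of x] unfolding Q_def by simp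
    qed
    finally show ?thesis .
  qed
  have Dint: "(\<lambda>x. \<theta> x * ((v x - vb x)^2 * Q (v x) (vb x))) integrable_on {a..b}"
    if vc: "continuous_on {a..b} v" for v
    unfolding Q_def using vc vbc \<theta>_cont by (intro integrable_continuous_interval continuous_intros) auto
  obtain x1 where x1: "x1 \<in> {a..b}" "\<forall>y\<in>{a..b}. \<theta> x1 \<le> \<theta> y"
    using continuous_attains_inf[OF compact_Icc _ \<theta>_cont] ab by auto
  obtain x2 where x2: "x2 \<in> {a..b}" "\<forall>y\<in>{a..b}. \<theta> y \<le> \<theta> x2"
    using continuous_attains_sup[OF compact_Icc _ \<theta>_cont] ab by auto
  define tmin where "tmin = \<theta> x1"
  define tmax where "tmax = \<theta> x2"
  have tmin: "tmin > 0" "\<And>y. y \<in> {a..b} \<Longrightarrow> tmin \<le> \<theta> y" using x1 \<theta>_pos tmin_def by auto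
  have tmax: "\<And>y. y \<in> {a..b} \<Longrightarrow> \<theta> y \<le> tmax" using x2 tmax_def by auto
  have part1: "local_max_wrt (C0 a b) (supnorm a b) (Kfun a b lam \<theta> F) vb"
    unfolding local_max_wrt_def
  proof (intro conjI exI[of _ "s - r"] ballI impI)
    show "vb \<in> C0 a b" by (rule vbC0)
    show "0 < s - r" using r by simp
    fix v assume v: "v \<in> C0 a b" "supnorm a b (\<lambda>x. v x - vb x) < s - r"
    have vc: "continuous_on {a..b} v" using v(1) unfolding C0_def by simp
    have dc: "continuous_on {a..b} (\<lambda>x. v x - vb x)" using vc vbc by (intro continuous_intros)
    have "integral {a..b} (\<lambda>x. \<theta> x * ((v x - vb x)^2 * Q (v x) (vb x))) \<le> integral {a..b} (\<lambda>x. 0)"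
    proof (rule integral_le[OF Dint[OF vc]])
      show "(\<lambda>x. 0::real) integrable_on {a..b}" by (rule integrable_const_ivl)
      fix x assume x: "x \<in> {a..b}"
      have d: "\<bar>v x - vb x\<bar> < s - r" using le_supnorm[OF dc x] v(2) by linarith
      have z: "\<bar>vb x\<bar> \<le> r" using vbb(1)[OF x] .
      have "\<bar>vb x\<bar> \<le> s" using z r by simp
      moreover have "\<bar>v x + vb x\<bar> \<le> 2 * s" using d z r(1,2) by (auto simp: abs_if split: if_splits)
      ultimately have "Q (v x) (vb x) \<le> 0" unfolding Q_def s_def by (rule Q_nonpos[OF lam])
      moreover have "\<theta> x > 0" using \<theta>_pos x by blast
      ultimately show "\<theta> x * ((v x - vb x)^2 * Q (v x) (vb x)) \<le> 0"
        by (simp add: mult_nonneg_nonpos)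
    qed
    then have "Kfun a b lam \<theta> F v - Kfun a b lam \<theta> F vb \<le> 0" using Kd[OF vc] by simp
    then show "Kfun a b lam \<theta> F v \<le> Kfun a b lam \<theta> F vb" by simp
  qed
  have part2: "\<not> local_min_wrt (C0 a b) (lpnorm a b p) (Kfun a b lam \<theta> F) vb" if p: "1 \<le> p" for p
  proof
    assume "local_min_wrt (C0 a b) (lpnorm a b p) (Kfun a b lam \<theta> F) vb"
    then obtain e where e: "e > 0" "\<forall>v\<in>C0 a b. lpnorm a b p (\<lambda>x. v x - vb x) < e \<longrightarrow> Kfun a b lam \<theta> F vb \<le> Kfun a b lam \<theta> F v"
      unfolding local_min_wrt_def by blast
    define d where "d = (b-a)/8"
    have d: "0 < d" "d \<le> (b-a)/8" using ab d_def by auto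
    define X where "X = (4*d) powr (1/p)"
    have X0: "X \<ge> 0" unfolding X_def by simp
    define t where "t = min ((s-r)/2) (e / (2*(X+1)))"
    have t: "0 < t" "t \<le> (s-r)/2" "t \<le> e/(2*(X+1))"
    proof -
      show "0 < t" using r(1,2) e(1) X0 unfolding t_def by auto
      show "t \<le> (s-r)/2" unfolding t_def by (rule min.cobounded1)
      show "t \<le> e/(2*(X+1))" unfolding t_def by (rule min.cobounded2)
    qed
    define c where "c = (a+b)/2"
    define v where "v = (\<lambda>x. vb x + t * trap c d x)"
    have vC0: "v \<in> C0 a b" and vlp: "lpnorm a b p (\<lambda>x. v x - vb x) \<le> t * X"
      using pert[OF ab d _ _ vbC0, of t p] t p unfolding v_def X_def c_def by auto
    have "t * X < e"
    proof -
      have 1: "t * X \<le> e/(2*(X+1)) * X" using t X0 by (intro mult_right_mono) auto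
      have xe: "0 \<le> X * e" using X0 e(1) by simp
      have "e/(2*(X+1)) * X < e" using e(1) X0 by (simp add: field_simps add_nonneg_pos xe)
      with 1 show ?thesis by linarith
    qed
    then have K1: "Kfun a b lam \<theta> F vb \<le> Kfun a b lam \<theta> F v" using e vC0 vlp by auto
    have vc: "continuous_on {a..b} v" using vC0 unfolding C0_def by simp
    define c0 where "c0 = lam/2 - (r + s)^2/8 - r^2/4"
    have c0: "c0 > 0" using c0_pos[OF lam r(1) r(2)[unfolded s_def]] unfolding c0_def s_def by simp
    have cd: "a \<le> c - d" "c - d \<le> c + d" "c + d \<le> b" using d ab unfolding c_def d_def by (auto simp: field_simps)
    have "integral {a..b} (\<lambda>x. \<theta> x * ((v x - vb x)^2 * Q (v x) (vb x)))
        \<le> integral {a..b} (\<lambda>x. if x \<in> {c-d..c+d} then -(tmin*c0*t^2) else 0)"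
    proof (rule integral_le[OF Dint[OF vc] ind_int(1)[OF cd]])
      fix x assume x: "x \<in> {a..b}"
      have T: "0 \<le> trap c d x" "trap c d x \<le> 1" using trap_props(1,2)[OF d(1)] by auto
      have z: "\<bar>vb x\<bar> \<le> r" using vbb(1)[OF x] .
      have vx: "v x - vb x = t * trap c d x" "v x + vb x = 2* vb x + t*trap c d x" unfolding v_def by simp_all
      have tt: "0 \<le> t * trap c d x" "t * trap c d x \<le> t" using T t by (auto simp: mult_left_le)
      have "\<bar>v x + vb x\<bar> \<le> r + sqrt (2*lam/3)" using z t(2) r(1,2) tt unfolding vx(2) s_def[symmetric]
        by (auto simp: abs_if split: if_splits)
      then have Qn: "Q (v x) (vb x) \<le> -c0" unfolding Q_def c0_def s_def using Q_neg[OF lam z _ r(1)] by blast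
      have th: "\<theta> x > 0" "tmin \<le> \<theta> x" using \<theta>_pos x tmin(2) by auto
      show "\<theta> x * ((v x - vb x)^2 * Q (v x) (vb x)) \<le> (if x \<in> {c-d..c+d} then -(tmin*c0*t^2) else 0)"
      proof (cases "x \<in> {c-d..c+d}")
        case True
        then have "\<bar>x - c\<bar> \<le> d" by auto
        then have "trap c d x = 1" using trap_props(4)[OF d(1)] by blast
        then have sq: "(v x - vb x)^2 = t^2" using vx by simp
        have "\<theta> x * (t^2 * Q (v x) (vb x)) \<le> \<theta> x * (t^2 * (-c0))"
          using Qn th by (intro mult_left_mono) auto
        also have "\<dots> \<le> tmin * (t^2 * (-c0))"
          using th c0 by (intro mult_right_mono_neg) auto
        finally show ?thesis using True sq by (simp add: algebra_simps)
      next
        case False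
        have "Q (v x) (vb x) \<le> 0" using Qn c0 by linarith
        then have "(v x - vb x)^2 * Q (v x) (vb x) \<le> 0" by (simp add: mult_nonneg_nonpos)
        then have "\<theta> x * ((v x - vb x)^2 * Q (v x) (vb x)) \<le> 0"
          by (rule mult_nonneg_nonpos[OF less_imp_le[OF th(1)]])
        then show ?thesis by (simp only: if_not_P[OF False])
      qed
    qed
    also have "\<dots> = -(tmin*c0*t^2) * ((c+d) - (c-d))" by (rule ind_int(2)[OF cd])
    also have "\<dots> < 0" using tmin(1) c0 t(1) d(1) by simp
    finally have "Kfun a b lam \<theta> F v - Kfun a b lam \<theta> F vb < 0" using Kd[OF vc] by simp
    with K1 show False by simp
  qed
  have part3: "\<not> local_max_wrt (C0 a b) (lpnorm a b p) (Kfun a b lam \<theta> F) vb" if p: "1 \<le> p" for p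
  proof
    assume "local_max_wrt (C0 a b) (lpnorm a b p) (Kfun a b lam \<theta> F) vb"
    then obtain e where e: "e > 0" "\<forall>v\<in>C0 a b. lpnorm a b p (\<lambda>x. v x - vb x) < e \<longrightarrow> Kfun a b lam \<theta> F v \<le> Kfun a b lam \<theta> F vb"
      unfolding local_max_wrt_def by blast
    have tmaxp: "tmax > 0" using tmin tmax x1(1) by force
    define k where "k = 8*(tmax*lam/tmin + lam/2) + 1"
    have k1: "1 \<le> k" using tmin(1) tmaxp lam unfolding k_def by simp
    define h where "h = 2 * s + k"
    have h: "0 < h" "2 * s \<le> h" "h - 2 * s = k" using s_pos k1 unfolding h_def by auto
    define d where "d = min ((b-a)/8) (((e/(2*h)) powr p)/4)"
    have epos: "0 < e/(2*h)" using e(1) h(1) by simp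
    have d: "0 < d" "d \<le> (b-a)/8" "4*d \<le> (e/(2*h)) powr p"
    proof -
      show "0 < d" unfolding d_def using ab epos e(1) h(1) by simp
      show "d \<le> (b-a)/8" unfolding d_def by (rule min.cobounded1)
      have "d \<le> ((e/(2*h)) powr p)/4" unfolding d_def by (rule min.cobounded2)
      then show "4*d \<le> (e/(2*h)) powr p" by simp
    qed
    define c where "c = (a+b)/2"
    define v where "v = (\<lambda>x. vb x + h * trap c d x)"
    have vC0: "v \<in> C0 a b" and vlp: "lpnorm a b p (\<lambda>x. v x - vb x) \<le> h * (4*d) powr (1/p)"
      using pert[OF ab d(1,2) _ _ vbC0, of h p] h p unfolding v_def c_def by auto
    have "(4*d) powr (1/p) \<le> ((e/(2*h)) powr p) powr (1/p)"
      using d p by (intro powr_mono2) auto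
    also have "\<dots> = e/(2*h)" using p epos e(1) h(1) by (simp add: powr_powr)
    finally have "h * (4*d) powr (1/p) \<le> h * (e/(2*h))" using h(1) by (intro mult_left_mono) auto
    also have "\<dots> = e/2" using h(1) by simp
    finally have "lpnorm a b p (\<lambda>x. v x - vb x) < e" using vlp e(1) by linarith
    then have K1: "Kfun a b lam \<theta> F v \<le> Kfun a b lam \<theta> F vb" using e(2) vC0 by blast
    have vc: "continuous_on {a..b} v" using vC0 unfolding C0_def by simp
    define A where "A = tmin * h^2 * (k^2/8 - lam/2)"
    define B where "B = tmax * lam/2 * h^2"
    have kk: "k \<le> k^2" using k1 by (simp add: power2_eq_square)
    define R where "R = tmax*lam/tmin"
    have kb: "k > 8*(R + lam/2)" unfolding k_def R_def by simp
    have "k^2/8 - lam/2 > R" using kk kb by argo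
    then have q1: "k^2/8 - lam/2 > tmax*lam/tmin" unfolding R_def .
    have q0: "k^2/8 - lam/2 > 0"
    proof -
      have "tmax*lam/tmin > 0" using tmaxp lam tmin(1) by simp
      then show ?thesis using q1 by linarith
    qed
    have q2: "tmin * (k^2/8 - lam/2) > tmax*lam"
    proof -
      have "tmin * (k^2/8 - lam/2) > tmin * (tmax*lam/tmin)" using q1 tmin(1) by (intro mult_strict_left_mono)
      then show ?thesis using tmin(1) by simp
    qed
    have AB: "A - 2*B > 0"
    proof -
      have "A - 2*B = h^2 * (tmin * (k^2/8 - lam/2) - tmax*lam)" unfolding A_def B_def by (simp add: algebra_simps)
      moreover have "h^2 > 0" using h(1) by simp
      ultimately show ?thesis using q2 by simp
    qed
    have B0: "B \<ge> 0" unfolding B_def using tmaxp lam by simp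
    have cd1: "a \<le> c - d" "c - d \<le> c + d" "c + d \<le> b" using d ab unfolding c_def by (auto simp: field_simps)
    have cd2: "a \<le> c - 2*d" "c - 2*d \<le> c + 2*d" "c + 2*d \<le> b" using d ab unfolding c_def by (auto simp: field_simps)
    have "integral {a..b} (\<lambda>x. (if x \<in> {c-d..c+d} then A else 0) - (if x \<in> {c-2*d..c+2*d} then B else 0))
        \<le> integral {a..b} (\<lambda>x. \<theta> x * ((v x - vb x)^2 * Q (v x) (vb x)))"
    proof (rule integral_le[OF integrable_diff[OF ind_int(1)[OF cd1] ind_int(1)[OF cd2]] Dint[OF vc]])
      fix x assume x: "x \<in> {a..b}"
      have T: "0 \<le> trap c d x" "trap c d x \<le> 1" using trap_props(1,2)[OF d(1)] by auto
      have z: "\<bar>vb x\<bar> \<le> r" using vbb(1)[OF x] .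
      have vx: "v x - vb x = h * trap c d x" "v x = vb x + h * trap c d x" unfolding v_def by simp_all
      have th: "\<theta> x > 0" "tmin \<le> \<theta> x" "\<theta> x \<le> tmax" using \<theta>_pos x tmin(2) tmax by auto
      have Qlow: "Q (v x) (vb x) \<ge> -lam/2" unfolding Q_def by simp
      show "(if x \<in> {c-d..c+d} then A else 0) - (if x \<in> {c-2*d..c+2*d} then B else 0)
          \<le> \<theta> x * ((v x - vb x)^2 * Q (v x) (vb x))"
      proof (cases "x \<in> {c-d..c+d}")
        case True
        then have "\<bar>x - c\<bar> \<le> d" by auto
        then have T1: "trap c d x = 1" using trap_props(4)[OF d(1)] by blast
        have "\<bar>vb x\<bar> \<le> s" using z r(2) by simp
        then have Qb: "k^2/8 - lam/2 \<le> Q (v x) (vb x)"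
          using Q_big[of "vb x" s h "v x" lam] h(2,3) vx(2) T1 unfolding Q_def by simp
        have sq: "(v x - vb x)^2 = h^2" using vx(1) T1 by simp
        have "A \<le> tmin * (h^2 * Q (v x) (vb x))"
          unfolding A_def using Qb tmin(1) by (simp add: mult_left_mono)
        also have "\<dots> \<le> \<theta> x * (h^2 * Q (v x) (vb x))"
          using th(2) Qb q0 by (intro mult_right_mono) auto
        finally have "A \<le> \<theta> x * ((v x - vb x)^2 * Q (v x) (vb x))" using sq by simp
        moreover have "x \<in> {c-2*d..c+2*d}" using True d(1) by auto
        ultimately show ?thesis using True B0 by simp
      next
        case False
        show ?thesis
        proof (cases "x \<in> {c-2*d..c+2*d}")
          case True
          have "(v x - vb x)^2 \<le> h^2" unfolding vx(1) using T h(1)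
            by (intro sq_le_of_abs) (simp add: abs_mult mult_left_le)
          have "(v x - vb x)^2 * Q (v x) (vb x) \<ge> (v x - vb x)^2 * (-lam/2)"
            using Qlow by (intro mult_left_mono) auto
          moreover have "(v x - vb x)^2 * (-lam/2) \<ge> h^2 * (-lam/2)"
            using \<open>(v x - vb x)^2 \<le> h^2\<close> lam by (intro mult_right_mono_neg) auto
          ultimately have P: "(v x - vb x)^2 * Q (v x) (vb x) \<ge> h^2 * (-lam/2)" by linarith
          have "\<theta> x * ((v x - vb x)^2 * Q (v x) (vb x)) \<ge> \<theta> x * (h^2 * (-lam/2))"
            using P th(1) by (intro mult_left_mono) auto
          moreover have "\<theta> x * (h^2 * (-lam/2)) \<ge> tmax * (h^2 * (-lam/2))"
            using th(3) lam by (intro mult_right_mono_neg) auto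
          moreover have "tmax * (h^2 * (-lam/2)) = -B" unfolding B_def by (simp add: algebra_simps)
          ultimately have "-B \<le> \<theta> x * ((v x - vb x)^2 * Q (v x) (vb x))" by linarith
          then show ?thesis unfolding if_not_P[OF False] if_P[OF True] by simp
        next
          case F2: False
          then have "\<bar>x - c\<bar> \<ge> 2*d" by auto
          then have "trap c d x = 0" using trap_props(3)[OF d(1)] by blast
          then show ?thesis unfolding if_not_P[OF False] if_not_P[OF F2] using vx(1) by simp
        qed
      qed
    qed
    also have "\<dots> = Kfun a b lam \<theta> F v - Kfun a b lam \<theta> F vb" using Kd[OF vc] by simp
    finally have K2: "integral {a..b} (\<lambda>x. (if x \<in> {c-d..c+d} then A else 0) - (if x \<in> {c-2*d..c+2*d} then B else 0))
        \<le> Kfun a b lam \<theta> F v - Kfun a b lam \<theta> F vb" .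
    have "integral {a..b} (\<lambda>x. (if x \<in> {c-d..c+d} then A else 0) - (if x \<in> {c-2*d..c+2*d} then B else 0))
       = A * ((c+d) - (c-d)) - B * ((c+2*d) - (c-2*d))"
      unfolding integral_diff[OF ind_int(1)[OF cd1] ind_int(1)[OF cd2]] ind_int(2)[OF cd1] ind_int(2)[OF cd2] ..
    also have "\<dots> = 2*d*(A - 2*B)" by (simp add: algebra_simps)
    also have "\<dots> > 0" using d(1) AB by simp
    finally show False using K1 K2 by linarith
  qed
  show ?thesis using part1 part2 part3 unfolding vb_def by blast
qed

end
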